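(* Let $n\ge2$, $\epsilon\in[-1,1]$, $h\in[0,1]$. For $0\le p\le 2n$, $$\min_{\sigma\in\mathcal C(p)}H(\sigma)=\begin{cases}n-(p-n)^2-p^2-\epsilon(n-2p)-2h(p-n) & 0\le p\le n,\\ n-(2n-p)^2-(p-n)^2-\epsilon(2p-3n)-2h(p-n) & n\le p\le 2n.\end{cases}$$ Moreover, for $0\le p\le n$ this minimum is attained on $C(p,0,0)$ and on $C(0,p,0)$, and for $n\le p\le 2n$ it is attained on $C(n,p-n,p-n)$ and on $C(p-n,n,p-n)$.
   Context: The graph $\mathcal G(2,n)$ has vertex set $V=V^{(1)}\cup V^{(2)}$ with $V^{(1)}=\{1,\dots,n\}$, $V^{(2)}=\{n+1,\dots,2n\}$; its edge set is $E=E_{\mathrm{int}}\cup E_{\mathrm{cross}}$, where $E_{\mathrm{int}}$ consists of all pairs of distinct vertices in the same $V^{(k)}$ and $E_{\mathrm{cross}}=\{\{i,i+n\}:1\le i\le n\}$. For $\sigma\in\{-1,+1\}^V$, $H(\sigma)=-\sum_{\{i,j\}\in E_{\mathrm{int}}}\sigma_i\sigma_j-\epsilon\sum_{\{i,j\}\in E_{\mathrm{cross}}}\sigma_i\sigma_j-h\sum_{i\in V}\sigma_i$. $C(p_1,p_2,a)$ is the set of configurations with exactly $p_1$ vertices of spin $+1$ in $V^{(1)}$, exactly $p_2$ vertices of spin $+1$ in $V^{(2)}$, and exactly $a$ cross-edges both of whose endpoints have spin $+1$. $\mathcal C(p)$ is the set of configurations with exactly $p$ vertices of spin $+1$ in $V$.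 *)

theory Defs
  imports Complex_Main "HOL-Library.FuncSet"
begin

definition V1 :: "nat \<Rightarrow> nat set" where "V1 n = {1..n}"
definition V2 :: "nat \<Rightarrow> nat set" where "V2 n = {n+1..2*n}"
definition Vx :: "nat \<Rightarrow> nat set" where "Vx n = V1 n \<union> V2 n"

definition E_int :: "nat \<Rightarrow> nat set set" where
  "E_int n = {{i, j} | i j. i \<noteq> j \<and> ((i \<in> V1 n \<and> j \<in> V1 n) \<or> (i \<in> V2 n \<and> j \<in> V2 n))}"

definition E_cross :: "nat \<Rightarrow> nat set set" where
  "E_cross n = {{i, i + n} | i. i \<in> {1..n}}"

definition configs :: "nat \<Rightarrow> (nat \<Rightarrow> int) set" where
  "configs n = Vx n \<rightarrow>\<^sub>E {-1, 1}"

definition Ham :: "nat \<Rightarrow> real \<Rightarrow> real \<Rightarrow> (nat \<Rightarrow> int) \<Rightarrow> real" where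
  "Ham n \<epsilon> h \<sigma> =
     - (\<Sum>e\<in>E_int n. real_of_int (\<Prod>i\<in>e. \<sigma> i))
     - \<epsilon> * (\<Sum>e\<in>E_cross n. real_of_int (\<Prod>i\<in>e. \<sigma> i))
     - h * (\<Sum>i\<in>Vx n. real_of_int (\<sigma> i))"

definition Cfg3 :: "nat \<Rightarrow> nat \<Rightarrow> nat \<Rightarrow> nat \<Rightarrow> (nat \<Rightarrow> int) set" where
  "Cfg3 n p1 p2 a = {\<sigma> \<in> configs n.
      card {i \<in> V1 n. \<sigma> i = 1} = p1 \<and> card {i \<in> V2 n. \<sigma> i = 1} = p2 \<and>
      card {e \<in> E_cross n. \<forall>i\<in>e. \<sigma> i = 1} = a}"

definition Cfg :: "nat \<Rightarrow> nat \<Rightarrow> (nat \<Rightarrow> int) set" where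
  "Cfg n p = {\<sigma> \<in> configs n. card {i \<in> Vx n. \<sigma> i = 1} = p}"

end

theory Submission
  imports Defs
begin

lemma sum_pm:
  fixes \<sigma> :: "nat \<Rightarrow> int"
  assumes "finite A" "\<forall>i\<in>A. \<sigma> i \<in> {-1,1}"
  shows "(\<Sum>i\<in>A. \<sigma> i) = 2 * int (card {i\<in>A. \<sigma> i = 1}) - int (card A)"
  using assms
proof (induction A rule: finite_induct)
  case empty then show ?case by simp
next
  case (insert x A)
  have f: "finite {i\<in>A. \<sigma> i = 1}" using insert by simp
  show ?case
  proof (cases "\<sigma> x = 1")
    case True
    then have "{i\<in>insert x A. \<sigma> i = 1} = insert x {i\<in>A. \<sigma> i = 1}" by auto
    then show ?thesis using insert True f by simp
  next
    case False
    then have "{i\<in>insert x A. \<sigma> i = 1} = {i\<in>A. \<sigma> i = 1}" by auto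
    moreover have "\<sigma> x = -1" using False insert by auto
    ultimately show ?thesis using insert by simp
  qed
qed

definition pairs :: "nat set \<Rightarrow> nat set set" where
  "pairs A = {{i, j} | i j. i \<noteq> j \<and> i \<in> A \<and> j \<in> A}"

lemma pairs_insert:
  assumes "x \<notin> A"
  shows "pairs (insert x A) = pairs A \<union> (\<lambda>j. {x, j}) ` A"
proof (rule set_eqI, rule iffI)
  fix e assume "e \<in> pairs (insert x A)"
  then obtain i j where e: "e = {i,j}" "i \<noteq> j" "i \<in> insert x A" "j \<in> insert x A"
    unfolding pairs_def by blast
  then show "e \<in> pairs A \<union> (\<lambda>j. {x, j}) ` A"
    unfolding pairs_def by (auto simp: insert_commute)
next
  fix e assume "e \<in> pairs A \<union> (\<lambda>j. {x, j}) ` A"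
  then show "e \<in> pairs (insert x A)" using assms unfolding pairs_def by blast
qed

lemma pairs_finite: "finite A \<Longrightarrow> finite (pairs A)"
proof -
  assume "finite A"
  moreover have "pairs A \<subseteq> Pow A" unfolding pairs_def by auto
  ultimately show ?thesis by (meson finite_Pow_iff finite_subset)
qed

lemma pairs_sum:
  fixes \<sigma> :: "nat \<Rightarrow> int"
  assumes "finite A" "\<forall>i\<in>A. \<sigma> i \<in> {-1,1}"
  shows "2 * (\<Sum>e\<in>pairs A. \<Prod>i\<in>e. \<sigma> i) = (\<Sum>i\<in>A. \<sigma> i)^2 - int (card A)"
  using assms
proof (induction A rule: finite_induct)
  case empty then show ?case by (simp add: pairs_def)
next
  case (insert x A)
  have disj: "pairs A \<inter> (\<lambda>j. {x, j}) ` A = {}"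
    using insert(2) unfolding pairs_def by (auto simp: doubleton_eq_iff)
  have inj: "inj_on (\<lambda>j. {x, j}) A"
    using insert(2) by (auto simp: inj_on_def doubleton_eq_iff)
  have pr: "(\<Prod>i\<in>{x,j}. \<sigma> i) = \<sigma> x * \<sigma> j" if "j \<in> A" for j
    using that insert(2) by (subst prod.insert) auto
  have "(\<Sum>e\<in>pairs (insert x A). \<Prod>i\<in>e. \<sigma> i)
      = (\<Sum>e\<in>pairs A. \<Prod>i\<in>e. \<sigma> i) + (\<Sum>e\<in>(\<lambda>j. {x, j}) ` A. \<Prod>i\<in>e. \<sigma> i)"
    unfolding pairs_insert[OF insert(2)]
    by (rule sum.union_disjoint) (use insert pairs_finite disj in auto)
  also have "(\<Sum>e\<in>(\<lambda>j. {x, j}) ` A. \<Prod>i\<in>e. \<sigma> i) = (\<Sum>j\<in>A. \<sigma> x * \<sigma> j)"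
    by (subst sum.reindex[OF inj]) (simp add: pr)
  also have "\<dots> = \<sigma> x * (\<Sum>j\<in>A. \<sigma> j)" by (simp add: sum_distrib_left)
  finally have e: "(\<Sum>e\<in>pairs (insert x A). \<Prod>i\<in>e. \<sigma> i)
      = (\<Sum>e\<in>pairs A. \<Prod>i\<in>e. \<sigma> i) + \<sigma> x * (\<Sum>j\<in>A. \<sigma> j)" .
  have sq: "\<sigma> x * \<sigma> x = 1" using insert by auto
  have IH: "2 * (\<Sum>e\<in>pairs A. \<Prod>i\<in>e. \<sigma> i) = (\<Sum>i\<in>A. \<sigma> i)^2 - int (card A)"
    using insert by auto
  show ?case using insert(1,2) e IH sq
    by (simp add: power2_eq_square algebra_simps)
qed

lemma pairs_sub: "e \<in> pairs A \<Longrightarrow> e \<subseteq> A \<and> e \<noteq> {}"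
  unfolding pairs_def by auto

lemma E_int_eq: "E_int n = pairs (V1 n) \<union> pairs (V2 n)"
  unfolding E_int_def pairs_def by blast

lemma V12_disj: "V1 n \<inter> V2 n = {}"
  unfolding V1_def V2_def by auto

lemma pairs_disj: "pairs (V1 n) \<inter> pairs (V2 n) = {}"
proof -
  have "e \<notin> pairs (V2 n)" if "e \<in> pairs (V1 n)" for e
    using pairs_sub[OF that] pairs_sub[of e "V2 n"] V12_disj[of n] by blast
  then show ?thesis by blast
qed

lemma E_cross_eq: "E_cross n = (\<lambda>i. {i, i + n}) ` {1..n}"
  unfolding E_cross_def by blast

lemma cross_inj: assumes "(n::nat) \<ge> 1" shows "inj_on (\<lambda>i. {i, i + n}) {1..n}"
proof (rule inj_onI)
  fix x y assume "{x, x + n} = {y, y + n}"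
  then show "x = y" using assms unfolding doubleton_eq_iff by (elim disjE conjE; linarith)
qed

definition P1 :: "nat \<Rightarrow> (nat \<Rightarrow> int) \<Rightarrow> nat" where
  "P1 n \<sigma> = card {i\<in>{1..n}. \<sigma> i = 1}"
definition P2 :: "nat \<Rightarrow> (nat \<Rightarrow> int) \<Rightarrow> nat" where
  "P2 n \<sigma> = card {i\<in>{1..n}. \<sigma> (i + n) = 1}"
definition AA :: "nat \<Rightarrow> (nat \<Rightarrow> int) \<Rightarrow> nat" where
  "AA n \<sigma> = card {i\<in>{1..n}. \<sigma> i = 1 \<and> \<sigma> (i + n) = 1}"

lemma V2_shift: "V2 n = (\<lambda>i. i + n) ` {1..n}"
proof (rule set_eqI)
  fix x show "x \<in> V2 n \<longleftrightarrow> x \<in> (\<lambda>i. i + n) ` {1..n}"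
  proof
    assume "x \<in> V2 n"
    then have "x - n \<in> {1..n}" "x = (x - n) + n" unfolding V2_def by auto
    then show "x \<in> (\<lambda>i. i + n) ` {1..n}" by blast
  qed (auto simp: V2_def)
qed

lemma card_V1: "card {i\<in>V1 n. \<sigma> i = 1} = P1 n \<sigma>"
  unfolding V1_def P1_def ..

lemma card_V2: "card {i\<in>V2 n. \<sigma> i = 1} = P2 n \<sigma>"
proof -
  have "{i\<in>V2 n. \<sigma> i = 1} = (\<lambda>i. i + n) ` {i\<in>{1..n}. \<sigma> (i + n) = 1}"
  proof (rule set_eqI, rule iffI)
    fix x assume "x \<in> {i\<in>V2 n. \<sigma> i = 1}"
    then have "x - n \<in> {i\<in>{1..n}. \<sigma> (i + n) = 1}" "x = (x - n) + n" unfolding V2_def by auto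
    then show "x \<in> (\<lambda>i. i + n) ` {i\<in>{1..n}. \<sigma> (i + n) = 1}" by blast
  qed (auto simp: V2_def)
  then show ?thesis unfolding P2_def by (simp add: card_image)
qed

lemma card_Vx: "card {i\<in>Vx n. \<sigma> i = 1} = P1 n \<sigma> + P2 n \<sigma>"
proof -
  have "{i\<in>Vx n. \<sigma> i = 1} = {i\<in>V1 n. \<sigma> i = 1} \<union> {i\<in>V2 n. \<sigma> i = 1}"
    unfolding Vx_def by auto
  moreover have "{i\<in>V1 n. \<sigma> i = 1} \<inter> {i\<in>V2 n. \<sigma> i = 1} = {}" using V12_disj[of n] by auto
  moreover have "finite {i\<in>V1 n. \<sigma> i = 1}" "finite {i\<in>V2 n. \<sigma> i = 1}"
    unfolding V1_def V2_def by auto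
  ultimately show ?thesis using card_V1 card_V2 card_Un_disjoint by metis
qed

lemma card_cross: "n \<ge> 1 \<Longrightarrow> card {e\<in>E_cross n. \<forall>i\<in>e. \<sigma> i = 1} = AA n \<sigma>"
proof -
  assume n: "n \<ge> 1"
  have "{e\<in>E_cross n. \<forall>i\<in>e. \<sigma> i = 1} = (\<lambda>i. {i, i + n}) ` {i\<in>{1..n}. \<sigma> i = 1 \<and> \<sigma> (i + n) = 1}"
    unfolding E_cross_eq by auto
  moreover have "inj_on (\<lambda>i. {i, i + n}) {i\<in>{1..n}. \<sigma> i = 1 \<and> \<sigma> (i + n) = 1}"
    using cross_inj[OF n] by (rule inj_on_subset) auto
  ultimately show ?thesis unfolding AA_def by (simp add: card_image)
qed

lemma ind_sum:
  assumes "finite A"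
  shows "(\<Sum>i\<in>A. if P i then 1 else 0::int) = int (card {i\<in>A. P i})"
  using sum.inter_filter[OF assms, of "\<lambda>_. 1::int" P] by simp

lemma config_vals: "\<sigma> \<in> configs n \<Longrightarrow> i \<in> Vx n \<Longrightarrow> \<sigma> i \<in> {-1, 1}"
  unfolding configs_def by (auto simp: PiE_def Pi_def)

lemma card_V1n: "card (V1 n) = n" by (simp add: V1_def)
lemma card_V2n: "card (V2 n) = n" by (simp add: V2_def)

lemma cross_term:
  fixes x y :: int
  assumes "x \<in> {-1,1}" "y \<in> {-1,1}"
  shows "x * y = 4 * (if x = 1 \<and> y = 1 then 1 else 0) - 2 * (if x = 1 then 1 else 0)
            - 2 * (if y = 1 then 1 else 0) + 1"
  using assms by auto

lemma ham_formula:
  assumes cfg: "\<sigma> \<in> configs n" and n: "n \<ge> 1"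
  shows "Ham n \<epsilon> h \<sigma> = real n
     - ((2 * real (P1 n \<sigma>) - real n)^2 + (2 * real (P2 n \<sigma>) - real n)^2) / 2
     - \<epsilon> * (4 * real (AA n \<sigma>) - 2 * real (P1 n \<sigma>) - 2 * real (P2 n \<sigma>) + real n)
     - h * (2 * real (P1 n \<sigma>) + 2 * real (P2 n \<sigma>) - 2 * real n)"
proof -
  have v1: "\<forall>i\<in>V1 n. \<sigma> i \<in> {-1,1}" using config_vals[OF cfg] unfolding Vx_def by auto
  have v2: "\<forall>i\<in>V2 n. \<sigma> i \<in> {-1,1}" using config_vals[OF cfg] unfolding Vx_def by auto
  have f1: "finite (V1 n)" and f2: "finite (V2 n)" by (simp_all add: V1_def V2_def)
  define S1 where "S1 = (\<Sum>i\<in>V1 n. \<sigma> i)"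
  define S2 where "S2 = (\<Sum>i\<in>V2 n. \<sigma> i)"
  have S1: "S1 = 2 * int (P1 n \<sigma>) - int n"
    unfolding S1_def using sum_pm[OF f1 v1] card_V1 card_V1n by simp
  have S2: "S2 = 2 * int (P2 n \<sigma>) - int n"
    unfolding S2_def using sum_pm[OF f2 v2] card_V2 card_V2n by simp
  define I where "I = (\<Sum>e\<in>E_int n. \<Prod>i\<in>e. \<sigma> i)"
  have "I = (\<Sum>e\<in>pairs (V1 n). \<Prod>i\<in>e. \<sigma> i) + (\<Sum>e\<in>pairs (V2 n). \<Prod>i\<in>e. \<sigma> i)"
    unfolding I_def E_int_eq
    by (rule sum.union_disjoint) (use pairs_finite f1 f2 pairs_disj in auto)
  then have I: "2 * I = S1^2 - int n + (S2^2 - int n)"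
    using pairs_sum[OF f1 v1] pairs_sum[OF f2 v2] card_V1n card_V2n unfolding S1_def S2_def
    by (simp add: algebra_simps)
  define C where "C = (\<Sum>e\<in>E_cross n. \<Prod>i\<in>e. \<sigma> i)"
  have "C = (\<Sum>i\<in>{1..n}. \<Prod>k\<in>{i, i + n}. \<sigma> k)"
    unfolding C_def E_cross_eq by (rule sum.reindex[OF cross_inj[OF n], unfolded comp_def])
  also have "\<dots> = (\<Sum>i\<in>{1..n}. \<sigma> i * \<sigma> (i + n))"
    using n by (intro sum.cong) auto
  also have "\<dots> = (\<Sum>i\<in>{1..n}. 4 * (if \<sigma> i = 1 \<and> \<sigma> (i + n) = 1 then 1 else 0) - 2 * (if \<sigma> i = 1 then 1 else 0)
            - 2 * (if \<sigma> (i + n) = 1 then 1 else 0) + 1)"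
  proof (intro sum.cong refl cross_term)
    fix i assume "i \<in> {1..n}"
    then have "i \<in> Vx n" "i + n \<in> Vx n" unfolding Vx_def V1_def V2_def by auto
    then show "\<sigma> i \<in> {-1,1}" "\<sigma> (i + n) \<in> {-1,1}" using config_vals[OF cfg] by auto
  qed
  also have "\<dots> = 4 * int (AA n \<sigma>) - 2 * int (P1 n \<sigma>) - 2 * int (P2 n \<sigma>) + int n"
    by (simp add: sum.distrib sum_subtractf sum_distrib_left[symmetric] ind_sum AA_def P1_def P2_def)
  finally have C: "C = 4 * int (AA n \<sigma>) - 2 * int (P1 n \<sigma>) - 2 * int (P2 n \<sigma>) + int n" .
  define F where "F = (\<Sum>i\<in>Vx n. \<sigma> i)"
  have F: "F = S1 + S2" unfolding F_def S1_def S2_def Vx_def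
    by (rule sum.union_disjoint) (use f1 f2 V12_disj in auto)
  have "Ham n \<epsilon> h \<sigma> = - real_of_int I - \<epsilon> * real_of_int C - h * real_of_int F"
    unfolding Ham_def I_def C_def F_def by (simp add: of_int_sum)
  moreover have "real_of_int I = (real_of_int S1^2 + real_of_int S2^2) / 2 - real n"
  proof -
    have "real_of_int (2 * I) = real_of_int (S1^2 - int n + (S2^2 - int n))" using I by simp
    then show ?thesis by (simp add: field_simps)
  qed
  ultimately show ?thesis using S1 S2 C F by simp
qed

lemma ham_alt:
  assumes cfg: "\<sigma> \<in> configs n" and n: "n \<ge> 1"
  shows "Ham n \<epsilon> h \<sigma> = real n
     - (real (P1 n \<sigma>) + real (P2 n \<sigma>) - real n)^2 - (real (P1 n \<sigma>) - real (P2 n \<sigma>))^2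
     - \<epsilon> * (4 * real (AA n \<sigma>) - 2 * (real (P1 n \<sigma>) + real (P2 n \<sigma>)) + real n)
     - h * (2 * (real (P1 n \<sigma>) + real (P2 n \<sigma>)) - 2 * real n)"
  unfolding ham_formula[OF assms] by (simp add: power2_eq_square field_simps)

lemma key_ineq:
  fixes a b d :: nat and \<epsilon> :: real
  assumes "d \<le> a" "d \<le> b" "\<epsilon> \<le> 1"
  shows "(real a - real b)^2 + 4 * \<epsilon> * real d \<le> (real a + real b)^2"
proof -
  have "d \<le> a * b"
  proof (cases "a = 0")
    case True then show ?thesis using assms by simp
  next
    case False then have "b \<le> a * b" by simp
    then show ?thesis using assms by linarith
  qed
  then have "real d \<le> real a * real b" by (metis of_nat_le_iff of_nat_mult)
  moreover have "\<epsilon> * real d \<le> real d" using mult_right_mono[OF assms(3), of "real d"] by simp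
  moreover have "(real a + real b)^2 - (real a - real b)^2 = 4 * (real a * real b)"
    by (simp add: power2_eq_square algebra_simps)
  ultimately show ?thesis by linarith
qed

lemma bounds:
  "P1 n \<sigma> \<le> n" "P2 n \<sigma> \<le> n" "AA n \<sigma> \<le> P1 n \<sigma>" "AA n \<sigma> \<le> P2 n \<sigma>"
  "P1 n \<sigma> + P2 n \<sigma> \<le> n + AA n \<sigma>"
proof -
  show "P1 n \<sigma> \<le> n" unfolding P1_def by (rule order_trans[OF card_mono[of "{1..n}"]]) auto
  show "P2 n \<sigma> \<le> n" unfolding P2_def by (rule order_trans[OF card_mono[of "{1..n}"]]) auto
  show "AA n \<sigma> \<le> P1 n \<sigma>" unfolding P1_def AA_def by (rule card_mono) auto
  show "AA n \<sigma> \<le> P2 n \<sigma>" unfolding P2_def AA_def by (rule card_mono) auto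
  have eq: "{i\<in>{1..n}. \<sigma> i = 1} \<inter> {i\<in>{1..n}. \<sigma> (i+n) = 1} = {i\<in>{1..n}. \<sigma> i = 1 \<and> \<sigma> (i + n) = 1}" by auto
  have "card ({i\<in>{1..n}. \<sigma> i = 1} \<union> {i\<in>{1..n}. \<sigma> (i+n) = 1}) + card ({i\<in>{1..n}. \<sigma> i = 1} \<inter> {i\<in>{1..n}. \<sigma> (i+n) = 1})
      = P1 n \<sigma> + P2 n \<sigma>" unfolding P1_def P2_def by (rule card_Un_Int[symmetric]) auto
  then have "card ({i\<in>{1..n}. \<sigma> i = 1} \<union> {i\<in>{1..n}. \<sigma> (i+n) = 1}) + AA n \<sigma> = P1 n \<sigma> + P2 n \<sigma>"
    unfolding eq AA_def .
  moreover have "card ({i\<in>{1..n}. \<sigma> i = 1} \<union> {i\<in>{1..n}. \<sigma> (i+n) = 1}) \<le> n"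
    by (rule order_trans[OF card_mono[of "{1..n}"]]) auto
  ultimately show "P1 n \<sigma> + P2 n \<sigma> \<le> n + AA n \<sigma>" by linarith
qed

lemma Cfg3_iff:
  assumes "n \<ge> 1"
  shows "\<sigma> \<in> Cfg3 n p1 p2 a \<longleftrightarrow> \<sigma> \<in> configs n \<and> P1 n \<sigma> = p1 \<and> P2 n \<sigma> = p2 \<and> AA n \<sigma> = a"
  unfolding Cfg3_def using card_V1 card_V2 card_cross[OF assms] by auto

lemma Cfg_iff: "\<sigma> \<in> Cfg n p \<longleftrightarrow> \<sigma> \<in> configs n \<and> P1 n \<sigma> + P2 n \<sigma> = p"
  unfolding Cfg_def using card_Vx by auto

definition mk :: "nat \<Rightarrow> nat set \<Rightarrow> nat \<Rightarrow> int" where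
  "mk n S = restrict (\<lambda>i. if i \<in> S then 1 else -1) (Vx n)"

lemma mk_cfg: "mk n S \<in> configs n"
  unfolding mk_def configs_def by auto

lemma mk_P1: "P1 n (mk n S) = card {i\<in>{1..n}. i \<in> S}"
  unfolding P1_def mk_def by (rule arg_cong[where f=card]) (auto simp: Vx_def V1_def)
lemma mk_P2: "P2 n (mk n S) = card {i\<in>{1..n}. i + n \<in> S}"
  unfolding P2_def mk_def by (rule arg_cong[where f=card]) (auto simp: Vx_def V2_def)
lemma mk_AA: "AA n (mk n S) = card {i\<in>{1..n}. i \<in> S \<and> i + n \<in> S}"
  unfolding AA_def mk_def by (rule arg_cong[where f=card]) (auto simp: Vx_def V1_def V2_def)

lemma Min_eq:
  fixes f :: "'a \<Rightarrow> real"
  assumes "finite A" "x \<in> A" "f x = m" "\<forall>y\<in>A. m \<le> f y"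
  shows "Min (f ` A) = m"
  using assms by (intro Min_eqI) auto

lemma finite_Cfg: "finite (Cfg n p)"
proof -
  have "finite (configs n)" unfolding configs_def by (rule finite_PiE) (auto simp: Vx_def V1_def V2_def)
  then show ?thesis unfolding Cfg_def by simp
qed

theorem proposition5p4:
  fixes n p :: nat and \<epsilon> h :: real
  assumes "n \<ge> 2" and "-1 \<le> \<epsilon>" and "\<epsilon> \<le> 1" and "0 \<le> h" and "h \<le> 1"
    and "p \<le> 2 * n"
  shows
    "(p \<le> n \<longrightarrow>
        Min (Ham n \<epsilon> h ` Cfg n p)
          = real n - (real p - real n)^2 - (real p)^2 - \<epsilon> * (real n - 2 * real p)
            - 2 * h * (real p - real n)
        \<and> Cfg3 n p 0 0 \<noteq> {} \<and> Cfg3 n 0 p 0 \<noteq> {}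
        \<and> (\<forall>\<sigma> \<in> Cfg3 n p 0 0. Ham n \<epsilon> h \<sigma> = Min (Ham n \<epsilon> h ` Cfg n p))
        \<and> (\<forall>\<sigma> \<in> Cfg3 n 0 p 0. Ham n \<epsilon> h \<sigma> = Min (Ham n \<epsilon> h ` Cfg n p)))
     \<and> (n \<le> p \<longrightarrow>
        Min (Ham n \<epsilon> h ` Cfg n p)
          = real n - (2 * real n - real p)^2 - (real p - real n)^2 - \<epsilon> * (2 * real p - 3 * real n)
            - 2 * h * (real p - real n)
        \<and> Cfg3 n n (p - n) (p - n) \<noteq> {} \<and> Cfg3 n (p - n) n (p - n) \<noteq> {}
        \<and> (\<forall>\<sigma> \<in> Cfg3 n n (p - n) (p - n). Ham n \<epsilon> h \<sigma> = Min (Ham n \<epsilon> h ` Cfg n p))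
        \<and> (\<forall>\<sigma> \<in> Cfg3 n (p - n) n (p - n). Ham n \<epsilon> h \<sigma> = Min (Ham n \<epsilon> h ` Cfg n p)))"
proof -
  have n1: "n \<ge> 1" using assms(1) by simp
  define T1 where "T1 = real n - (real p - real n)^2 - (real p)^2 - \<epsilon> * (real n - 2 * real p)
            - 2 * h * (real p - real n)"
  define T2 where "T2 = real n - (2 * real n - real p)^2 - (real p - real n)^2 - \<epsilon> * (2 * real p - 3 * real n)
            - 2 * h * (real p - real n)"
  have lb1: "T1 \<le> Ham n \<epsilon> h \<sigma>" if "p \<le> n" "\<sigma> \<in> Cfg n p" for \<sigma>
  proof -
    have c: "\<sigma> \<in> configs n" and s: "P1 n \<sigma> + P2 n \<sigma> = p" using that Cfg_iff by auto
    define x where "x = real (P1 n \<sigma>)"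
    define y where "y = real (P2 n \<sigma>)"
    define A where "A = real (AA n \<sigma>)"
    have rp: "real p = x + y" unfolding x_def y_def using s by simp
    have k: "(x - y)^2 + 4 * \<epsilon> * A \<le> (x + y)^2"
      unfolding x_def y_def A_def by (rule key_ineq) (use bounds assms in auto)
    have H: "Ham n \<epsilon> h \<sigma> = real n - (x + y - real n)^2 - (x - y)^2
       - \<epsilon> * (4 * A - 2 * (x + y) + real n) - h * (2 * (x + y) - 2 * real n)"
      unfolding x_def y_def A_def by (rule ham_alt[OF c n1])
    have "Ham n \<epsilon> h \<sigma> - T1 = (x + y)^2 - (x - y)^2 - 4 * \<epsilon> * A"
      unfolding H T1_def rp by algebra
    then show ?thesis using k by linarith
  qed
  have lb2: "T2 \<le> Ham n \<epsilon> h \<sigma>" if "n \<le> p" "\<sigma> \<in> Cfg n p" for \<sigma>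
  proof -
    have c: "\<sigma> \<in> configs n" and s: "P1 n \<sigma> + P2 n \<sigma> = p" using that Cfg_iff by auto
    define x where "x = real (P1 n \<sigma>)"
    define y where "y = real (P2 n \<sigma>)"
    define A where "A = real (AA n \<sigma>)"
    have rp: "real p = x + y" unfolding x_def y_def using s by simp
    have b: "P1 n \<sigma> \<le> n" "P2 n \<sigma> \<le> n" "AA n \<sigma> \<le> P1 n \<sigma>" "AA n \<sigma> \<le> P2 n \<sigma>"
      "P1 n \<sigma> + P2 n \<sigma> \<le> n + AA n \<sigma>" using bounds by auto
    have k: "(real (n - P1 n \<sigma>) - real (n - P2 n \<sigma>))^2 + 4 * \<epsilon> * real (AA n \<sigma> + n - P1 n \<sigma> - P2 n \<sigma>)
        \<le> (real (n - P1 n \<sigma>) + real (n - P2 n \<sigma>))^2"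
      by (rule key_ineq) (use b assms in auto)
    have e1: "real (n - P1 n \<sigma>) = real n - x" unfolding x_def using b by (simp add: of_nat_diff)
    have e2: "real (n - P2 n \<sigma>) = real n - y" unfolding y_def using b by (simp add: of_nat_diff)
    have e3: "real (AA n \<sigma> + n - P1 n \<sigma> - P2 n \<sigma>) = A + real n - x - y" unfolding x_def y_def A_def
      using b by (simp add: of_nat_diff)
    have k': "((real n - x) - (real n - y))^2 + 4 * \<epsilon> * (A + real n - x - y) \<le> ((real n - x) + (real n - y))^2"
      using k unfolding e1 e2 e3 .
    have H: "Ham n \<epsilon> h \<sigma> = real n - (x + y - real n)^2 - (x - y)^2
       - \<epsilon> * (4 * A - 2 * (x + y) + real n) - h * (2 * (x + y) - 2 * real n)"
      unfolding x_def y_def A_def by (rule ham_alt[OF c n1])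
    have "Ham n \<epsilon> h \<sigma> - T2 = ((real n - x) + (real n - y))^2 - ((real n - x) - (real n - y))^2 - 4 * \<epsilon> * (A + real n - x - y)"
      unfolding H T2_def rp by algebra
    then show ?thesis using k' by linarith
  qed
  have val: "Ham n \<epsilon> h \<sigma> = real n - (real p1 + real p2 - real n)^2 - (real p1 - real p2)^2
       - \<epsilon> * (4 * real a - 2 * (real p1 + real p2) + real n) - h * (2 * (real p1 + real p2) - 2 * real n)"
    if "\<sigma> \<in> Cfg3 n p1 p2 a" for \<sigma> p1 p2 a
    using that ham_alt[OF _ n1] Cfg3_iff[OF n1] by auto
  have sub: "Cfg3 n p1 p2 a \<subseteq> Cfg n p" if "p1 + p2 = p" for p1 p2 a
    using that Cfg3_iff[OF n1] Cfg_iff by auto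
  have fin: "finite (Cfg n p)" by (rule finite_Cfg)
  show ?thesis
  proof (intro conjI impI)
    assume pn: "p \<le> n"
    have w1: "mk n {1..p} \<in> Cfg3 n p 0 0"
    proof -
      have "{i\<in>{1..n}. i \<in> {1..p}} = {1..p}" using pn by auto
      moreover have "{i\<in>{1..n}. i + n \<in> {1..p}} = {}" using pn by auto
      moreover have "{i\<in>{1..n}. i \<in> {1..p} \<and> i + n \<in> {1..p}} = {}" using pn by auto
      ultimately show ?thesis unfolding Cfg3_iff[OF n1] using mk_cfg mk_P1 mk_P2 mk_AA by simp
    qed
    have w2: "mk n {n+1..n+p} \<in> Cfg3 n 0 p 0"
    proof -
      have "{i\<in>{1..n}. i \<in> {n+1..n+p}} = {}" using pn by auto
      moreover have "{i\<in>{1..n}. i + n \<in> {n+1..n+p}} = {1..p}" using pn by auto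
      moreover have "{i\<in>{1..n}. i \<in> {n+1..n+p} \<and> i + n \<in> {n+1..n+p}} = {}" using pn by auto
      ultimately show ?thesis unfolding Cfg3_iff[OF n1] using mk_cfg mk_P1 mk_P2 mk_AA by simp
    qed
    have v1: "Ham n \<epsilon> h \<sigma> = T1" if "\<sigma> \<in> Cfg3 n p 0 0" for \<sigma>
      unfolding val[OF that] T1_def of_nat_0 by algebra
    have v2: "Ham n \<epsilon> h \<sigma> = T1" if "\<sigma> \<in> Cfg3 n 0 p 0" for \<sigma>
      unfolding val[OF that] T1_def of_nat_0 by algebra
    have M: "Min (Ham n \<epsilon> h ` Cfg n p) = T1"
      by (rule Min_eq[OF fin, of "mk n {1..p}"]) (use w1 sub[of p 0 0] v1 lb1 pn in auto)
    show "Min (Ham n \<epsilon> h ` Cfg n p)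
          = real n - (real p - real n)^2 - (real p)^2 - \<epsilon> * (real n - 2 * real p)
            - 2 * h * (real p - real n)" using M unfolding T1_def .
    show "Cfg3 n p 0 0 \<noteq> {}" using w1 by auto
    show "Cfg3 n 0 p 0 \<noteq> {}" using w2 by auto
    show "\<forall>\<sigma> \<in> Cfg3 n p 0 0. Ham n \<epsilon> h \<sigma> = Min (Ham n \<epsilon> h ` Cfg n p)" using v1 M by auto
    show "\<forall>\<sigma> \<in> Cfg3 n 0 p 0. Ham n \<epsilon> h \<sigma> = Min (Ham n \<epsilon> h ` Cfg n p)" using v2 M by auto
  next
    assume pn: "n \<le> p"
    have w1: "mk n {1..p} \<in> Cfg3 n n (p - n) (p - n)"
    proof -
      have "{i\<in>{1..n}. i \<in> {1..p}} = {1..n}" using pn by auto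
      moreover have "{i\<in>{1..n}. i + n \<in> {1..p}} = {1..p-n}" using pn assms(6) by auto
      moreover have "{i\<in>{1..n}. i \<in> {1..p} \<and> i + n \<in> {1..p}} = {1..p-n}" using pn assms(6) by auto
      ultimately show ?thesis unfolding Cfg3_iff[OF n1] using mk_cfg mk_P1 mk_P2 mk_AA by simp
    qed
    have w2: "mk n ({1..p-n} \<union> {n+1..2*n}) \<in> Cfg3 n (p - n) n (p - n)"
    proof -
      have "{i\<in>{1..n}. i \<in> {1..p-n} \<union> {n+1..2*n}} = {1..p-n}" using pn assms(6) by auto
      moreover have "{i\<in>{1..n}. i + n \<in> {1..p-n} \<union> {n+1..2*n}} = {1..n}" using pn by auto
      moreover have "{i\<in>{1..n}. i \<in> {1..p-n} \<union> {n+1..2*n} \<and> i + n \<in> {1..p-n} \<union> {n+1..2*n}} = {1..p-n}"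
        using pn assms(6) by auto
      ultimately show ?thesis unfolding Cfg3_iff[OF n1] using mk_cfg mk_P1 mk_P2 mk_AA by simp
    qed
    have rpn: "real (p - n) = real p - real n" using pn by (simp add: of_nat_diff)
    have v1: "Ham n \<epsilon> h \<sigma> = T2" if "\<sigma> \<in> Cfg3 n n (p - n) (p - n)" for \<sigma>
      unfolding val[OF that] T2_def rpn by algebra
    have v2: "Ham n \<epsilon> h \<sigma> = T2" if "\<sigma> \<in> Cfg3 n (p - n) n (p - n)" for \<sigma>
      unfolding val[OF that] T2_def rpn by algebra
    have M: "Min (Ham n \<epsilon> h ` Cfg n p) = T2"
      by (rule Min_eq[OF fin, of "mk n {1..p}"]) (use w1 sub[of n "p - n" "p - n"] v1 lb2 pn in auto)
    show "Min (Ham n \<epsilon> h ` Cfg n p)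
          = real n - (2 * real n - real p)^2 - (real p - real n)^2 - \<epsilon> * (2 * real p - 3 * real n)
            - 2 * h * (real p - real n)" using M unfolding T2_def .
    show "Cfg3 n n (p - n) (p - n) \<noteq> {}" using w1 by auto
    show "Cfg3 n (p - n) n (p - n) \<noteq> {}" using w2 by auto
    show "\<forall>\<sigma> \<in> Cfg3 n n (p - n) (p - n). Ham n \<epsilon> h \<sigma> = Min (Ham n \<epsilon> h ` Cfg n p)" using v1 M by auto
    show "\<forall>\<sigma> \<in> Cfg3 n (p - n) n (p - n). Ham n \<epsilon> h \<sigma> = Min (Ham n \<epsilon> h ` Cfg n p)" using v2 M by auto
  qed
qed

end
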